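(* Let $(\Omega,T)$ be a strictly ergodic subshift over a finite alphabet $A\subset\mathbb{R}$. Then $M^E$ is uniform for each $E\in\mathbb{R}$ with $\gamma(E)=0$.
   Context: Let $A\subset\mathbb{R}$ be finite with the discrete topology, $A^{\mathbb{Z}}$ with the product topology, and $T$ the shift $(Ta)(n)=a(n+1)$. A subshift is a closed $T$-invariant set $\Omega\subset A^{\mathbb{Z}}$; it is strictly ergodic if every orbit is dense and there is exactly one $T$-invariant Borel probability measure $\mu$ on $\Omega$. For $E\in\mathbb{R}$, $M^E(\omega)=\begin{pmatrix}E-\omega(1)&-1\\1&0\end{pmatrix}$, $M^E(n,\omega)=M^E(T^{n-1}\omega)\cdots M^E(\omega)$ for $n>0$, $\mathrm{Id}$ for $n=0$, $M^E(T^n\omega)^{-1}\cdots M^E(T^{-1}\omega)^{-1}$ for $n<0$. With $\|\cdot\|$ the operator norm, $\gamma(E)$ is the number with $\lim_{|n|\to\infty}\frac1{|n|}\log\|M^E(n,\omega)\|=\gamma(E)$ for $\mu$-a.e. $\omega$. $M^E$ is uniform if this limit exists for every $\omega\in\Omega$ and the convergence is uniform on $\Omega$. *)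

theory Defs
  imports "HOL-Analysis.Analysis" "HOL-Probability.Probability"
begin

definition shiftn :: "int \<Rightarrow> (int \<Rightarrow> real) \<Rightarrow> (int \<Rightarrow> real)" where
  "shiftn k w = (\<lambda>n. w (n + k))"

abbreviation shift :: "(int \<Rightarrow> real) \<Rightarrow> (int \<Rightarrow> real)" where
  "shift \<equiv> shiftn 1"

definition subshift :: "real set \<Rightarrow> (int \<Rightarrow> real) set \<Rightarrow> bool" where
  "subshift A \<Omega> \<longleftrightarrow> finite A \<and> \<Omega> \<subseteq> {w. \<forall>n. w n \<in> A} \<and> closed \<Omega> \<and> shift ` \<Omega> = \<Omega>"

definition orbit :: "(int \<Rightarrow> real) \<Rightarrow> (int \<Rightarrow> real) set" where
  "orbit w = {shiftn k w | k. True}"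

definition invariant_prob :: "(int \<Rightarrow> real) set \<Rightarrow> (int \<Rightarrow> real) measure \<Rightarrow> bool" where
  "invariant_prob \<Omega> \<mu> \<longleftrightarrow> prob_space \<mu> \<and> space \<mu> = \<Omega> \<and> sets \<mu> = sets (restrict_space borel \<Omega>)
     \<and> shift \<in> measurable \<mu> \<mu> \<and> distr \<mu> \<mu> shift = \<mu>"

definition strictly_ergodic :: "(int \<Rightarrow> real) set \<Rightarrow> bool" where
  "strictly_ergodic \<Omega> \<longleftrightarrow> (\<forall>w\<in>\<Omega>. \<Omega> \<subseteq> closure (orbit w)) \<and> (\<exists>!\<mu>. invariant_prob \<Omega> \<mu>)"

definition transfer :: "real \<Rightarrow> (int \<Rightarrow> real) \<Rightarrow> real^2^2" where
  "transfer E w = vector [vector [E - w 1, -1], vector [1, 0]]"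

fun cocycle_pos :: "real \<Rightarrow> (int \<Rightarrow> real) \<Rightarrow> nat \<Rightarrow> real^2^2" where
  "cocycle_pos E w 0 = mat 1"
| "cocycle_pos E w (Suc n) = transfer E (shiftn (int n) w) ** cocycle_pos E w n"

fun cocycle_neg :: "real \<Rightarrow> (int \<Rightarrow> real) \<Rightarrow> nat \<Rightarrow> real^2^2" where
  "cocycle_neg E w 0 = mat 1"
| "cocycle_neg E w (Suc m) = matrix_inv (transfer E (shiftn (- int (Suc m)) w)) ** cocycle_neg E w m"

definition cocycle :: "real \<Rightarrow> int \<Rightarrow> (int \<Rightarrow> real) \<Rightarrow> real^2^2" where
  "cocycle E n w = (if n \<ge> 0 then cocycle_pos E w (nat n) else cocycle_neg E w (nat (- n)))"

definition opnorm :: "real^2^2 \<Rightarrow> real" where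
  "opnorm M = onorm (\<lambda>x. M *v x)"

definition growth :: "real \<Rightarrow> int \<Rightarrow> (int \<Rightarrow> real) \<Rightarrow> real" where
  "growth E n w = ln (opnorm (cocycle E n w)) / real_of_int \<bar>n\<bar>"

definition lyap_limit :: "real \<Rightarrow> (int \<Rightarrow> real) \<Rightarrow> real \<Rightarrow> bool" where
  "lyap_limit E w g \<longleftrightarrow> ((\<lambda>n. growth E n w) \<longlongrightarrow> g) (sup at_top at_bot)"

definition uniform_cocycle :: "(int \<Rightarrow> real) set \<Rightarrow> real \<Rightarrow> bool" where
  "uniform_cocycle \<Omega> E \<longleftrightarrow> (\<exists>g. uniform_limit \<Omega> (\<lambda>n w. growth E n w) g (sup at_top at_bot))"

end

theory Submission
  imports Defs
begin


lemma norm2: "norm (x::real^2) = sqrt ((x$1)^2 + (x$2)^2)"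
  by (simp add: norm_vec_def L2_set_def sum_2)

lemma mv2: "(M *v (x::real^2)) $ 1 = M$1$1 * x$1 + M$1$2 * x$2"
  "(M *v (x::real^2)) $ 2 = M$2$1 * x$1 + M$2$2 * x$2"
  by (simp_all add: matrix_vector_mult_def sum_2)

lemma mm2: "((A::real^2^2) ** B) $ i $ j = A$i$1 * B$1$j + A$i$2 * B$2$j"
  by (simp add: matrix_matrix_mult_def sum_2)

lemma eq22: "((A::real^2^2) = B) \<longleftrightarrow> A$1$1 = B$1$1 \<and> A$1$2 = B$1$2 \<and> A$2$1 = B$2$1 \<and> A$2$2 = B$2$2"
  by (auto simp: vec_eq_iff forall_2)

lemma opnorm_ge: "norm (M *v x) \<le> opnorm M * norm x"
  unfolding opnorm_def by (rule onorm) simp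

lemma opnorm_le: "(\<And>x. norm (M *v x) \<le> b * norm x) \<Longrightarrow> opnorm M \<le> b"
  unfolding opnorm_def by (rule onorm_le)

lemma opnorm_mult: "opnorm (A ** B) \<le> opnorm A * opnorm (B::real^2^2)"
proof -
  have "(\<lambda>x. (A ** B) *v x) = (\<lambda>x. A *v x) \<circ> (\<lambda>x. B *v x)"
    by (auto simp: matrix_vector_mul_assoc)
  then show ?thesis unfolding opnorm_def
    by (metis onorm_compose matrix_vector_mul_bounded_linear)
qed

lemma opnorm_nonneg: "0 \<le> opnorm M"
  unfolding opnorm_def by (rule onorm_pos_le) simp

lemma opnorm_det1: assumes "det (M::real^2^2) = 1" shows "1 \<le> opnorm M"
proof -
  define a b c d where "a = M$1$1" "b = M$1$2" "c = M$2$1" "d = M$2$2"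
  have d: "a*d - b*c = 1" using assms by (simp add: det_2 a_b_c_d_def)
  define s where "s = opnorm M"
  have s0: "0 \<le> s" using opnorm_nonneg s_def by simp
  have e1: "norm ((axis 1 1)::real^2) = 1" "norm ((axis 2 1)::real^2) = 1"
    by (simp_all add: norm2 axis_def)
  have "norm (M *v axis 1 1) \<le> s" using opnorm_ge[of M "axis 1 1"] e1 s_def by simp
  then have h1: "sqrt (a^2 + c^2) \<le> s" by (simp add: norm2 mv2 axis_def a_b_c_d_def)
  have "norm (M *v axis 2 1) \<le> s" using opnorm_ge[of M "axis 2 1"] e1 s_def by simp
  then have h2: "sqrt (b^2 + d^2) \<le> s" by (simp add: norm2 mv2 axis_def a_b_c_d_def)
  have "a^2 + c^2 \<le> s^2" using h1 s0
    by (metis real_sqrt_le_iff real_sqrt_pow2_iff real_sqrt_unique sum_power2_ge_zero zero_le_power2)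
  moreover have "b^2 + d^2 \<le> s^2" using h2 s0
    by (metis real_sqrt_le_iff real_sqrt_pow2_iff real_sqrt_unique sum_power2_ge_zero zero_le_power2)
  moreover have "(a^2+c^2)*(b^2+d^2) = (a*d-b*c)^2 + (a*b+c*d)^2" by algebra
  ultimately have "1 \<le> s^2 * s^2" using d
    by (smt (verit) mult_mono sum_power2_ge_zero zero_le_power2 power_one)
  moreover have "s^2 * s^2 = s^4" by (simp flip: power_add)
  ultimately have "1^4 \<le> s^4" by simp
  then have "1 \<le> s"
  proof (rule contrapos_pp)
    assume "\<not> 1 \<le> s"
    then have "s^4 < 1^4" using power_strict_mono[of s 1 4] s0 by simp
    then show "\<not> 1^4 \<le> s^4" by simp
  qed
  then show ?thesis using s_def by simp
qed

definition adj2 :: "real^2^2 \<Rightarrow> real^2^2" where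
  "adj2 M = (\<chi> i j. if i = 1 then (if j = 1 then M$2$2 else - M$1$2) else (if j = 1 then - M$2$1 else M$1$1))"

lemma adj2_comp: "adj2 M $1$1 = M$2$2" "adj2 M $1$2 = - M$1$2" "adj2 M $2$1 = - M$2$1" "adj2 M $2$2 = M$1$1"
  by (simp_all add: adj2_def)

lemma adj2_mult: "adj2 (A ** B) = adj2 B ** adj2 A"
  by (simp add: eq22 adj2_comp mm2 algebra_simps)

lemma adj2_adj2: "adj2 (adj2 A) = A"
  by (simp add: eq22 adj2_comp)

lemma adj2_inv: assumes "det (M::real^2^2) = 1" shows "M ** adj2 M = mat 1" "adj2 M ** M = mat 1"
  using assms by (simp_all add: eq22 adj2_comp mm2 det_2 mat_def algebra_simps)

lemma matrix_inv_adj2: assumes "det (M::real^2^2) = 1" shows "matrix_inv M = adj2 M"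
proof -
  have "M ** X = mat 1 \<and> X ** M = mat 1 \<Longrightarrow> X = adj2 M" for X
    by (metis adj2_inv(2) assms matrix_mul_assoc matrix_mul_lid matrix_mul_rid)
  moreover have "M ** adj2 M = mat 1 \<and> adj2 M ** M = mat 1" using adj2_inv[OF assms] by simp
  ultimately show ?thesis unfolding matrix_inv_def
    by (rule some_equality[rotated])
qed

lemma opnorm_adj2_le: "opnorm (adj2 M) \<le> opnorm M"
proof (rule opnorm_le)
  fix x :: "real^2"
  define y :: "real^2" where "y = vector [x$2, - x$1]"
  define z where "z = transpose M *v y"
  have ny: "norm y = norm x" by (simp add: y_def norm2 add.commute)
  have nz: "norm (adj2 M *v x) = norm z"
    by (simp add: z_def y_def norm2 mv2 adj2_comp transpose_def algebra_simps power2_eq_square)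
  have "norm z ^2 = inner y (M *v z)"
    unfolding power2_norm_eq_inner
    by (simp add: z_def norm2 mv2 transpose_def inner_vec_def sum_2 power2_eq_square algebra_simps)
  also have "\<dots> \<le> norm y * norm (M *v z)" by (rule norm_cauchy_schwarz)
  also have "\<dots> \<le> norm y * (opnorm M * norm z)" by (simp add: mult_left_mono opnorm_ge)
  finally have "norm z * norm z \<le> (opnorm M * norm y) * norm z" by (simp add: power2_eq_square algebra_simps)
  then have "norm z \<le> opnorm M * norm y"
    by (cases "norm z = 0") (auto simp: opnorm_nonneg)
  then show "norm (adj2 M *v x) \<le> opnorm M * norm x" using nz ny by simp
qed

lemma opnorm_adj2: "opnorm (adj2 M) = opnorm M"
  by (metis adj2_adj2 antisym opnorm_adj2_le)

lemma opnorm_bound: "opnorm (M::real^2^2) \<le> \<bar>M$1$1\<bar> + \<bar>M$1$2\<bar> + \<bar>M$2$1\<bar> + \<bar>M$2$2\<bar>"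
proof (rule opnorm_le)
  fix x :: "real^2"
  have "norm (M *v x) \<le> \<bar>(M *v x)$1\<bar> + \<bar>(M *v x)$2\<bar>" using norm_le_l1_cart[of "M *v x"] by (simp add: sum_2)
  also have "\<dots> \<le> (\<bar>M$1$1\<bar> + \<bar>M$1$2\<bar>) * norm x + (\<bar>M$2$1\<bar> + \<bar>M$2$2\<bar>) * norm x"
  proof -
    have x1: "\<bar>x$1\<bar> \<le> norm x" "\<bar>x$2\<bar> \<le> norm x" by (simp_all add: component_le_norm_cart)
    have "\<bar>M$i$1 * x$1 + M$i$2 * x$2\<bar> \<le> (\<bar>M$i$1\<bar> + \<bar>M$i$2\<bar>) * norm x" for i
    proof -
      have "\<bar>M$i$1 * x$1 + M$i$2 * x$2\<bar> \<le> \<bar>M$i$1\<bar> * \<bar>x$1\<bar> + \<bar>M$i$2\<bar> * \<bar>x$2\<bar>"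
        by (metis abs_mult abs_triangle_ineq)
      also have "\<dots> \<le> \<bar>M$i$1\<bar> * norm x + \<bar>M$i$2\<bar> * norm x"
        using x1 by (intro add_mono mult_left_mono) auto
      finally show ?thesis by (simp add: algebra_simps)
    qed
    then show ?thesis by (simp add: mv2 add_mono)
  qed
  finally show "norm (M *v x) \<le> (\<bar>M$1$1\<bar> + \<bar>M$1$2\<bar> + \<bar>M$2$1\<bar> + \<bar>M$2$2\<bar>) * norm x"
    by (simp add: algebra_simps)
qed

lemma transfer_comp: "transfer E w $1$1 = E - w 1" "transfer E w $1$2 = -1"
  "transfer E w $2$1 = 1" "transfer E w $2$2 = 0"
  by (simp_all add: transfer_def)

lemma det_transfer: "det (transfer E w) = 1"
  by (simp add: det_2 transfer_comp)

lemma opnorm_transfer: "opnorm (transfer E w) \<le> \<bar>E - w 1\<bar> + 2"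
  using opnorm_bound[of "transfer E w"] by (simp add: transfer_comp)


lemma shiftn_shiftn: "shiftn a (shiftn b w) = shiftn (a + b) w"
  by (simp add: shiftn_def ac_simps)

lemma shiftn_0[simp]: "shiftn 0 w = w"
  by (simp add: shiftn_def)

lemma shiftn_apply: "shiftn k w n = w (n + k)"
  by (simp add: shiftn_def)

lemma cp_add: "cocycle_pos E w (n + m) = cocycle_pos E (shiftn (int n) w) m ** cocycle_pos E w n"
proof (induction m)
  case 0 then show ?case by (simp add: matrix_mul_lid)
next
  case (Suc m)
  have "shiftn (int (n + m)) w = shiftn (int m) (shiftn (int n) w)"
    by (simp add: shiftn_shiftn add.commute)
  then show ?case using Suc by (simp add: matrix_mul_assoc)
qed

lemma det_cp: "det (cocycle_pos E w n) = 1"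
  by (induction n) (simp_all add: det_mul det_transfer det_I)

lemma cp_local: "(\<And>i. 1 \<le> i \<Longrightarrow> i \<le> int n \<Longrightarrow> v i = w i) \<Longrightarrow> cocycle_pos E v n = cocycle_pos E w n"
proof (induction n)
  case 0 then show ?case by simp
next
  case (Suc n)
  have "transfer E (shiftn (int n) v) = transfer E (shiftn (int n) w)"
    using Suc.prems[of "1 + int n"] by (simp add: transfer_def shiftn_apply add.commute)
  then show ?case using Suc by simp
qed

lemma cn_adj: "cocycle_neg E w m = adj2 (cocycle_pos E (shiftn (- int m) w) m)"
proof (induction m)
  case 0 then show ?case by (simp add: eq22 adj2_comp mat_def)
next
  case (Suc m)
  define v where "v = shiftn (- int (Suc m)) w"
  have sv: "shiftn (int 1) v = shiftn (- int m) w" by (simp add: v_def shiftn_shiftn)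
  have "cocycle_pos E v (1 + m) = cocycle_pos E (shiftn (- int m) w) m ** transfer E v"
    using cp_add[of E v 1 m] sv by (simp add: matrix_mul_rid)
  then have "adj2 (cocycle_pos E v (Suc m)) = adj2 (transfer E v) ** cocycle_neg E w m"
    using Suc by (simp add: adj2_mult)
  then show ?case
    by (simp add: v_def matrix_inv_adj2 det_transfer)
qed

definition FF :: "real \<Rightarrow> nat \<Rightarrow> (int \<Rightarrow> real) \<Rightarrow> real" where
  "FF E n w = ln (opnorm (cocycle_pos E w n))"

lemma opnorm_cp_ge1: "1 \<le> opnorm (cocycle_pos E w n)"
  by (rule opnorm_det1) (rule det_cp)

lemma FF_nonneg: "0 \<le> FF E n w"
  unfolding FF_def using opnorm_cp_ge1 by simp

lemma FF_sub: "FF E (n + m) w \<le> FF E m (shiftn (int n) w) + FF E n w"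
proof -
  have p1: "0 < opnorm (cocycle_pos E (shiftn (int n) w) m)" "0 < opnorm (cocycle_pos E w n)"
    using opnorm_cp_ge1 by (auto intro: less_le_trans[OF zero_less_one])
  have "opnorm (cocycle_pos E w (n + m)) \<le> opnorm (cocycle_pos E (shiftn (int n) w) m) * opnorm (cocycle_pos E w n)"
    unfolding cp_add by (rule opnorm_mult)
  then have "FF E (n + m) w \<le> ln (opnorm (cocycle_pos E (shiftn (int n) w) m) * opnorm (cocycle_pos E w n))"
    unfolding FF_def using opnorm_cp_ge1 by (intro ln_mono) (auto intro: less_le_trans[OF zero_less_one])
  also have "\<dots> = FF E m (shiftn (int n) w) + FF E n w"
    using p1 by (simp add: FF_def ln_mult)
  finally show ?thesis .
qed

lemma FF_one: assumes "\<And>i. \<bar>w i\<bar> \<le> B" shows "FF E 1 w \<le> ln (\<bar>E\<bar> + B + 2)"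
proof -
  have "opnorm (cocycle_pos E w 1) \<le> \<bar>E - w 1\<bar> + 2"
    using opnorm_transfer[of E w] by (simp add: matrix_mul_rid)
  also have "\<dots> \<le> \<bar>E\<bar> + B + 2" using assms[of 1] by simp
  finally show ?thesis unfolding FF_def using opnorm_cp_ge1[of E w 1]
    by (intro ln_mono) (auto intro: less_le_trans[OF zero_less_one])
qed

lemma FF_le: assumes "\<And>i. \<bar>w i\<bar> \<le> B" shows "FF E n w \<le> real n * ln (\<bar>E\<bar> + B + 2)"
proof (induction n)
  case 0
  have "opnorm (mat 1) \<le> 1" by (rule opnorm_le) simp
  then have "ln (opnorm (mat 1)) \<le> 0" using opnorm_det1[of "mat 1"] by (simp add: det_I)
  then show ?case by (simp add: FF_def)
next
  case (Suc n)
  have "FF E (n + 1) w \<le> FF E 1 (shiftn (int n) w) + FF E n w" by (rule FF_sub)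
  moreover have "FF E 1 (shiftn (int n) w) \<le> ln (\<bar>E\<bar> + B + 2)"
    by (rule FF_one) (simp add: shiftn_apply assms)
  moreover have "real (Suc n) * ln (\<bar>E\<bar> + B + 2) = ln (\<bar>E\<bar> + B + 2) + real n * ln (\<bar>E\<bar> + B + 2)"
    by (simp add: distrib_right)
  moreover have "FF E (Suc n) w = FF E (n + 1) w" by simp
  ultimately show ?case using Suc.IH by linarith
qed

lemma FF_local: assumes "\<And>i. 1 \<le> i \<Longrightarrow> i \<le> int n \<Longrightarrow> v i = w i" shows "FF E n v = FF E n w"
proof -
  have "cocycle_pos E v n = cocycle_pos E w n" by (rule cp_local) (rule assms)
  then show ?thesis unfolding FF_def by simp
qed

lemma growth_pos: assumes "n \<ge> 0" shows "growth E n w = FF E (nat n) w / real_of_int n"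
proof -
  have "cocycle E n w = cocycle_pos E w (nat n)" using assms by (simp add: cocycle_def)
  moreover have "\<bar>n\<bar> = n" using assms by simp
  ultimately show ?thesis unfolding growth_def FF_def by (simp only:)
qed

lemma growth_neg: "growth E (- int m) w = FF E m (shiftn (- int m) w) / real m"
proof (cases m)
  case 0 then show ?thesis by (simp add: growth_def)
next
  case (Suc k)
  then have c1: "\<not> (- int m \<ge> 0)" by simp
  have c2: "nat (- (- int m)) = m" by simp
  have "cocycle E (- int m) w = cocycle_neg E w m" unfolding cocycle_def by (simp only: if_not_P[OF c1] c2)
  moreover have "\<bar>- int m\<bar> = int m" by simp
  ultimately show ?thesis unfolding growth_def FF_def cn_adj by (simp only: opnorm_adj2 of_int_of_nat_eq)
qed


lemma block_ineq:
  fixes G :: "nat \<Rightarrow> nat \<Rightarrow> real" and c :: real and N n :: nat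
  assumes sub: "\<And>a b j. G (a + b) j \<le> G b (j + a) + G a j"
    and nn: "\<And>a j. 0 \<le> G a j" and bd: "\<And>a j. G a j \<le> real a * c" and N: "N \<ge> 1"
  shows "real N * G n 0 \<le> (\<Sum>j<n. G N j) + 2 * real N * real N * c"
proof -
  have c0: "0 \<le> c" using nn[of 1 0] bd[of 1 0] by simp
  have blocks: "G (k * N) j \<le> (\<Sum>i<k. G N (j + i * N))" for k j
  proof (induction k)
    case 0 then show ?case using bd[of 0 j] by simp
  next
    case (Suc k)
    have "G (k * N + N) j \<le> G N (j + k * N) + G (k * N) j" by (rule sub)
    then show ?case using Suc by (simp add: add.commute)
  qed
  define S where "S r = (\<lambda>i. r + i * N) ` {..<(n - r) div N}" for r
  have injS: "inj_on (\<lambda>i. r + i * N) A" for r A using N by (auto simp: inj_on_def)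
  have per_r: "G n 0 \<le> (\<Sum>j\<in>S r. G N j) + 2 * real N * c" if r: "r < N" for r
  proof (cases "r \<le> n")
    case True
    define k where "k = (n - r) div N"
    define s where "s = (n - r) mod N"
    have ns: "n = r + (k * N + s)" using True by (simp add: k_def s_def)
    have sN: "s < N" using N by (simp add: s_def)
    have "G n 0 \<le> G (k * N + s) r + G r 0" using sub[of r "k * N + s" 0] ns by simp
    also have "G (k * N + s) r \<le> G s (r + k * N) + G (k * N) r" by (rule sub)
    also have "G s (r + k * N) \<le> real N * c" using bd[of s] sN c0
      by (meson less_imp_le mult_right_mono of_nat_le_iff order_trans)
    also have "G r 0 \<le> real N * c" using bd[of r] r c0
      by (meson less_imp_le mult_right_mono of_nat_le_iff order_trans)
    also have "G (k * N) r \<le> (\<Sum>j\<in>S r. G N j)"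
      using blocks[of k r] by (simp add: S_def k_def sum.reindex[OF injS])
    finally show ?thesis by (simp add: algebra_simps)
  next
    case False
    then have "S r = {}" by (simp add: S_def)
    moreover have "G n 0 \<le> real N * c" using bd[of n] False r c0
      by (meson less_imp_le mult_right_mono of_nat_le_iff order_trans not_le less_trans)
    moreover have "0 \<le> real N * c" using c0 by simp
    moreover have "2 * real N * c = 2 * (real N * c)" by simp
    ultimately show ?thesis by simp
  qed
  have "real N * G n 0 = (\<Sum>r<N. G n 0)" by simp
  also have "\<dots> \<le> (\<Sum>r<N. (\<Sum>j\<in>S r. G N j) + 2 * real N * c)"
    by (rule sum_mono) (use per_r in auto)
  also have "\<dots> = (\<Sum>r<N. (\<Sum>j\<in>S r. G N j)) + 2 * real N * real N * c"
    by (simp add: sum.distrib)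
  also have "(\<Sum>r<N. (\<Sum>j\<in>S r. G N j)) = (\<Sum>j\<in>(\<Union>r<N. S r). G N j)"
  proof (rule sum.UNION_disjoint[symmetric])
    show "\<forall>r\<in>{..<N}. finite (S r)" by (simp add: S_def)
    show "\<forall>r1\<in>{..<N}. \<forall>r2\<in>{..<N}. r1 \<noteq> r2 \<longrightarrow> S r1 \<inter> S r2 = {}"
    proof (intro ballI impI)
      fix r1 r2 assume "r1 \<in> {..<N}" "r2 \<in> {..<N}" "r1 \<noteq> r2"
      moreover have "j \<in> S r \<Longrightarrow> r < N \<Longrightarrow> j mod N = r" for j r by (auto simp: S_def)
      ultimately show "S r1 \<inter> S r2 = {}" by auto
    qed
  qed simp
  also have "\<dots> \<le> (\<Sum>j<n. G N j)"
  proof (rule sum_mono2)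
    show "(\<Union>r<N. S r) \<subseteq> {..<n}"
    proof
      fix j assume "j \<in> (\<Union>r<N. S r)"
      then obtain r i where ri: "r < N" "i < (n - r) div N" "j = r + i * N" by (auto simp: S_def)
      have "(i + 1) * N \<le> ((n - r) div N) * N" using ri(2) by (intro mult_right_mono) auto
      also have "\<dots> \<le> n - r" by (simp add: div_times_less_eq_dividend)
      finally show "j \<in> {..<n}" using ri N by (auto simp: algebra_simps)
    qed
  qed (auto simp: nn)
  finally show ?thesis by simp
qed


lemma shift_eq: "shift w = shiftn 1 w" by simp

lemma subshift_shiftn_in:
  assumes "subshift A \<Omega>" "w \<in> \<Omega>" shows "shiftn (int j) w \<in> \<Omega>"
proof (induction j)
  case 0 then show ?case using assms by simp
next
  case (Suc j)
  have "shiftn (int (Suc j)) w = shift (shiftn (int j) w)" by (simp add: shiftn_shiftn add.commute)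
  then show ?case using Suc assms(1) unfolding subshift_def by blast
qed

lemma subshift_shiftn_neg_in:
  assumes "subshift A \<Omega>" "w \<in> \<Omega>" shows "shiftn (- int j) w \<in> \<Omega>"
proof (induction j)
  case 0 then show ?case using assms by simp
next
  case (Suc j)
  from Suc have "shiftn (- int j) w \<in> shift ` \<Omega>" using assms(1) unfolding subshift_def by blast
  then obtain u where u: "u \<in> \<Omega>" "shiftn (- int j) w = shift u" by blast
  then have "shiftn (- 1) (shiftn (- int j) w) = u" by (simp add: shiftn_shiftn)
  moreover have "shiftn (- int (Suc j)) w = shiftn (- 1) (shiftn (- int j) w)" by (simp add: shiftn_shiftn)
  ultimately show ?case using u by simp
qed

lemma subshift_vals: "subshift A \<Omega> \<Longrightarrow> w \<in> \<Omega> \<Longrightarrow> w i \<in> A"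
  unfolding subshift_def by blast

lemma fiber_card:
  fixes n :: nat
  assumes "finite W" "\<And>j. j < n \<Longrightarrow> g j \<in> W"
  shows "(\<Sum>y\<in>W \<inter> Y. card {j. j < n \<and> g j = y}) = card {j. j < n \<and> g j \<in> Y}"
proof -
  have "(\<Sum>y\<in>W \<inter> Y. card {j. j < n \<and> g j = y}) = (\<Sum>y\<in>W \<inter> Y. sum (\<lambda>_. 1::nat) {x \<in> {j. j < n \<and> g j \<in> Y}. g x = y})"
    by (intro sum.cong refl) (auto intro: arg_cong[where f=card])
  also have "\<dots> = sum (\<lambda>_. 1::nat) {j. j < n \<and> g j \<in> Y}"
  proof (rule sum.group)
    show "finite {j. j < n \<and> g j \<in> Y}" by (rule finite_subset[of _ "{..<n}"]) auto
  qed (use assms in auto)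
  finally show ?thesis by simp
qed

definition cntf :: "nat \<Rightarrow> (int \<Rightarrow> real) \<Rightarrow> ((int \<Rightarrow> real) \<Rightarrow> bool) \<Rightarrow> nat" where
  "cntf n w P = card {j. j < n \<and> P (shiftn (int j) w)}"

lemma cntf_le: "cntf n w P \<le> n"
proof -
  have "cntf n w P \<le> card {..<n}" unfolding cntf_def by (rule card_mono) auto
  then show ?thesis by simp
qed

lemma cntf_True: "cntf n w (\<lambda>_. True) = n"
  by (simp add: cntf_def)

lemma cntf_cong: "(\<And>v. P v = Q v) \<Longrightarrow> cntf n w P = cntf n w Q"
  by (simp add: cntf_def)

lemma cntf_shift: "\<bar>real (cntf n w (\<lambda>v. P (shift v))) - real (cntf n w P)\<bar> \<le> 1"
proof -
  define S where "S = {j. j < n \<and> P (shiftn (int j) w)}"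
  define S' where "S' = {j. j < n \<and> P (shift (shiftn (int j) w))}"
  have sh: "shift (shiftn (int j) w) = shiftn (int (Suc j)) w" for j
    by (simp add: shiftn_shiftn add.commute)
  have cS': "card S' = card (Suc ` S')" by (simp add: card_image)
  have i1: "Suc ` S' \<subseteq> insert n S"
    using sh by (auto simp: S_def S'_def less_Suc_eq)
  have i2: "S \<subseteq> insert 0 (Suc ` S')"
  proof
    fix j assume "j \<in> S"
    then show "j \<in> insert 0 (Suc ` S')"
      using sh by (cases j) (auto simp: S_def S'_def)
  qed
  have f: "finite S" "finite S'" by (auto simp: S_def S'_def)
  have "card (Suc ` S') \<le> card S + 1"
    using card_mono[OF _ i1] f card_insert_le_m1 by (metis card_insert_if finite_insert le_SucI nat_le_linear Suc_eq_plus1 le_antisym)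
  moreover have "card S \<le> card (Suc ` S') + 1"
    using card_mono[OF _ i2] f by (metis card_insert_if finite_imageI finite_insert le_SucI Suc_eq_plus1 le_refl)
  ultimately show ?thesis unfolding cntf_def S_def[symmetric] S'_def[symmetric] using cS' by linarith
qed


lemma cont_coord[continuous_intros]: "continuous_on S (\<lambda>q::'a \<Rightarrow> real. q i)"
  by (rule continuous_on_subset[OF continuous_on_product_coordinates]) simp

locale freqs =
  fixes A :: "real set" and \<Omega> :: "(int \<Rightarrow> real) set" and nk :: "nat \<Rightarrow> nat" and wk :: "nat \<Rightarrow> (int \<Rightarrow> real)"
  assumes ss: "subshift A \<Omega>" and wk: "\<And>k. wk k \<in> \<Omega>" and nk: "\<And>k. nk k > k"
begin

definition W :: "int set \<Rightarrow> (int \<Rightarrow> real) set" where "W J = PiE J (\<lambda>_. A)"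

definition ef :: "nat \<Rightarrow> (int set \<times> (int \<Rightarrow> real)) \<Rightarrow> real" where
  "ef k = (\<lambda>(J, y). real (cntf (nk k) (wk k) (\<lambda>v. restrict v J = y)) / real (nk k))"

lemma finA: "finite A" using ss by (simp add: subshift_def)

lemma finite_W: "finite J \<Longrightarrow> finite (W J)"
  unfolding W_def using finA by (simp add: finite_PiE)

lemma restrict_in_W: "v \<in> \<Omega> \<Longrightarrow> restrict v J \<in> W J"
  unfolding W_def using subshift_vals[OF ss] by auto

lemma orbit_in: "shiftn (int j) (wk k) \<in> \<Omega>"
  by (rule subshift_shiftn_in[OF ss wk])

lemma nk_pos: "real (nk k) > 0" using nk[of k] by simp

lemma ef_mass: assumes "finite J"
  shows "(\<Sum>y\<in>W J \<inter> Y. ef k (J, y)) = real (cntf (nk k) (wk k) (\<lambda>v. restrict v J \<in> Y)) / real (nk k)"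
proof -
  have "(\<Sum>y\<in>W J \<inter> Y. ef k (J, y)) = (\<Sum>y\<in>W J \<inter> Y. real (card {j. j < nk k \<and> restrict (shiftn (int j) (wk k)) J = y})) / real (nk k)"
    by (simp add: ef_def cntf_def sum_divide_distrib)
  also have "(\<Sum>y\<in>W J \<inter> Y. real (card {j. j < nk k \<and> restrict (shiftn (int j) (wk k)) J = y})) = real (\<Sum>y\<in>W J \<inter> Y. card {j. j < nk k \<and> restrict (shiftn (int j) (wk k)) J = y})"
    by simp
  also have "(\<Sum>y\<in>W J \<inter> Y. card {j. j < nk k \<and> restrict (shiftn (int j) (wk k)) J = y}) = card {j. j < nk k \<and> restrict (shiftn (int j) (wk k)) J \<in> Y}"
    by (rule fiber_card) (auto simp: finite_W assms restrict_in_W orbit_in)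
  finally show ?thesis by (simp add: cntf_def)
qed

lemma ef_nonneg: "0 \<le> ef k i"
  by (auto simp: ef_def split: prod.splits)

lemma ef_le1: "ef k i \<le> 1"
  using cntf_le nk_pos by (auto simp: ef_def split: prod.splits)

definition q :: "(int set \<times> (int \<Rightarrow> real)) \<Rightarrow> real" where
  "q = (SOME q. \<forall>U. open U \<longrightarrow> q \<in> U \<longrightarrow> frequently (\<lambda>k. ef k \<in> U) sequentially)"

lemma q_cluster: "open U \<Longrightarrow> q \<in> U \<Longrightarrow> frequently (\<lambda>k. ef k \<in> U) sequentially"
proof -
  define K :: "(int set \<times> (int \<Rightarrow> real) \<Rightarrow> real) set" where "K = PiE UNIV (\<lambda>_. {0..1})"
  have "compactin (product_topology (\<lambda>_. euclidean) UNIV) K"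
    unfolding K_def compactin_PiE by (simp add: compactin_euclidean_iff)
  then have cK: "compact K" by (simp add: euclidean_product_topology compactin_euclidean_iff)
  define F where "F = filtermap ef sequentially"
  have "F \<noteq> bot" by (simp add: F_def filtermap_bot_iff)
  moreover have "eventually (\<lambda>x. x \<in> K) F"
    unfolding F_def eventually_filtermap K_def
    by (intro always_eventually allI) (simp add: PiE_iff ef_nonneg ef_le1)
  ultimately obtain x where x: "inf (nhds x) F \<noteq> bot" using cK unfolding compact_filter by blast
  have "\<forall>U. open U \<longrightarrow> x \<in> U \<longrightarrow> frequently (\<lambda>k. ef k \<in> U) sequentially"
  proof (intro allI impI)
    fix U :: "(int set \<times> (int \<Rightarrow> real) \<Rightarrow> real) set" assume U: "open U" "x \<in> U"
    show "frequently (\<lambda>k. ef k \<in> U) sequentially"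
    proof (rule ccontr)
      assume "\<not> frequently (\<lambda>k. ef k \<in> U) sequentially"
      then have "eventually (\<lambda>k. ef k \<notin> U) sequentially" by (simp add: frequently_def)
      then have e1: "eventually (\<lambda>y. y \<notin> U) F" by (simp add: F_def eventually_filtermap)
      have e2: "eventually (\<lambda>y. y \<in> U) (nhds x)" using U by (rule eventually_nhds_in_open)
      have "eventually (\<lambda>_. False) (inf (nhds x) F)"
        unfolding eventually_inf using e1 e2 by blast
      then show False using x by (simp add: eventually_False)
    qed
  qed
  then have "\<forall>U. open U \<longrightarrow> q \<in> U \<longrightarrow> frequently (\<lambda>k. ef k \<in> U) sequentially"
    unfolding q_def by (rule someI[where x=x])
  then show "open U \<Longrightarrow> q \<in> U \<Longrightarrow> frequently (\<lambda>k. ef k \<in> U) sequentially" by blast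
qed

lemma clusterD:
  assumes g: "continuous_on UNIV g" and ev: "\<And>\<delta>. \<delta> > 0 \<Longrightarrow> eventually (\<lambda>k. g (ef k) \<le> \<delta>) sequentially"
  shows "g q \<le> (0::real)"
proof (rule ccontr)
  assume "\<not> g q \<le> 0"
  then have pos: "g q / 2 > 0" by simp
  define U where "U = g -` {g q / 2 <..}"
  have "open U" unfolding U_def by (rule open_vimage[OF _ g]) simp
  moreover have "q \<in> U" using pos by (simp add: U_def)
  ultimately have "frequently (\<lambda>k. ef k \<in> U) sequentially" by (rule q_cluster)
  moreover have "eventually (\<lambda>k. ef k \<notin> U) sequentially"
    using ev[OF pos] by eventually_elim (simp add: U_def)
  ultimately show False by (simp add: frequently_def)
qed

lemma q_eqI:
  assumes "continuous_on UNIV L" "continuous_on UNIV R"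
    and ev: "\<And>\<delta>. \<delta> > 0 \<Longrightarrow> eventually (\<lambda>k. \<bar>L (ef k) - R (ef k)\<bar> \<le> \<delta>) sequentially"
  shows "L q = (R q :: real)"
proof -
  have "(\<lambda>x. \<bar>L x - R x\<bar>) q \<le> 0"
    by (rule clusterD) (use assms in \<open>auto intro!: continuous_intros\<close>)
  then show ?thesis by simp
qed

lemma ev_small: assumes "\<delta> > 0" "C \<ge> 0" shows "eventually (\<lambda>k. C / real (nk k) \<le> \<delta>) sequentially"
proof -
  obtain N :: nat where N: "C / \<delta> < real N" using reals_Archimedean2 by blast
  show ?thesis unfolding eventually_sequentially
  proof (intro exI allI impI)
    fix k assume "N \<le> k"
    then have "real N < real (nk k)" using nk[of k] by simp
    then have "C / \<delta> < real (nk k)" using N by simp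
    then have "C < \<delta> * real (nk k)" using assms by (simp add: field_simps)
    then show "C / real (nk k) \<le> \<delta>" using nk_pos[of k] by (simp add: field_simps)
  qed
qed

lemma q_nonneg: "0 \<le> q i"
proof -
  have "(\<lambda>x. - x i) q \<le> 0"
  proof (rule clusterD)
    fix \<delta> :: real assume "\<delta> > 0"
    then show "eventually (\<lambda>k. (\<lambda>x. - x i) (ef k) \<le> \<delta>) sequentially"
      using ef_nonneg by (intro always_eventually allI) (smt (verit))
  qed (auto intro!: continuous_intros)
  then show ?thesis by simp
qed

lemma q_sum1: assumes "finite J" shows "(\<Sum>y\<in>W J. q (J, y)) = 1"
proof -
  have "(\<lambda>x. \<Sum>y\<in>W J \<inter> UNIV. x (J, y)) q = (\<lambda>x. 1) q"
  proof (rule q_eqI)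
    fix \<delta> :: real assume "\<delta> > 0"
    have "(\<Sum>y\<in>W J \<inter> UNIV. ef k (J, y)) = 1" for k
      using ef_mass[OF assms, of k UNIV] nk_pos[of k] by (simp add: cntf_True)
    then show "eventually (\<lambda>k. \<bar>(\<Sum>y\<in>W J \<inter> UNIV. ef k (J, y)) - 1\<bar> \<le> \<delta>) sequentially"
      using \<open>\<delta> > 0\<close> by simp
  qed (auto intro!: continuous_intros)
  then show ?thesis by simp
qed

lemma q_cons: assumes "finite H" "J \<subseteq> H"
  shows "(\<Sum>y\<in>W H \<inter> {x. restrict x J \<in> X}. q (H, y)) = (\<Sum>y\<in>W J \<inter> X. q (J, y))"
proof -
  have fJ: "finite J" using assms finite_subset by blast
  have "(\<lambda>x. \<Sum>y\<in>W H \<inter> {x. restrict x J \<in> X}. x (H, y)) q = (\<lambda>x. \<Sum>y\<in>W J \<inter> X. x (J, y)) q"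
  proof (rule q_eqI)
    fix \<delta> :: real assume "\<delta> > 0"
    have "(\<Sum>y\<in>W H \<inter> {x. restrict x J \<in> X}. ef k (H, y)) = (\<Sum>y\<in>W J \<inter> X. ef k (J, y))" for k
    proof -
      have "cntf (nk k) (wk k) (\<lambda>v. restrict v H \<in> {x. restrict x J \<in> X}) = cntf (nk k) (wk k) (\<lambda>v. restrict v J \<in> X)"
        by (rule cntf_cong) (use assms in \<open>simp add: restrict_restrict Int_absorb1\<close>)
      then show ?thesis by (simp add: ef_mass assms fJ)
    qed
    then show "eventually (\<lambda>k. \<bar>(\<Sum>y\<in>W H \<inter> {x. restrict x J \<in> X}. ef k (H, y)) - (\<Sum>y\<in>W J \<inter> X. ef k (J, y))\<bar> \<le> \<delta>) sequentially"
      using \<open>\<delta> > 0\<close> by simp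
  qed (auto intro!: continuous_intros)
  then show ?thesis by simp
qed

lemma q_shift: assumes "finite J"
  shows "(\<Sum>y\<in>W ((\<lambda>i. i + 1) ` J) \<inter> PiE ((\<lambda>i. i + 1) ` J) (\<lambda>i. B (i - 1)). q ((\<lambda>i. i + 1) ` J, y))
       = (\<Sum>y\<in>W J \<inter> PiE J B. q (J, y))"
proof -
  define J' where "J' = (\<lambda>i. i + 1) ` J"
  have fJ': "finite J'" using assms by (simp add: J'_def)
  have "(\<lambda>x. \<Sum>y\<in>W J' \<inter> PiE J' (\<lambda>i. B (i - 1)). x (J', y)) q = (\<lambda>x. \<Sum>y\<in>W J \<inter> PiE J B. x (J, y)) q"
  proof (rule q_eqI)
    fix \<delta> :: real assume "\<delta> > 0"
    have pt: "\<bar>(\<Sum>y\<in>W J' \<inter> PiE J' (\<lambda>i. B (i - 1)). ef k (J', y)) - (\<Sum>y\<in>W J \<inter> PiE J B. ef k (J, y))\<bar> \<le> 1 / real (nk k)" for k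
    proof -
      define P where "P v = (\<forall>i\<in>J. v i \<in> B i)" for v :: "int \<Rightarrow> real"
      have c1: "cntf (nk k) (wk k) (\<lambda>v. restrict v J' \<in> PiE J' (\<lambda>i. B (i - 1))) = cntf (nk k) (wk k) (\<lambda>v. P (shift v))"
        by (rule cntf_cong) (auto simp: J'_def P_def PiE_iff shiftn_apply)
      have c2: "cntf (nk k) (wk k) (\<lambda>v. restrict v J \<in> PiE J B) = cntf (nk k) (wk k) P"
        by (rule cntf_cong) (auto simp: P_def PiE_iff)
      have "\<bar>real (cntf (nk k) (wk k) (\<lambda>v. P (shift v))) - real (cntf (nk k) (wk k) P)\<bar> / real (nk k) \<le> 1 / real (nk k)"
        using cntf_shift nk_pos[of k] by (intro divide_right_mono) auto
      moreover have "(\<Sum>y\<in>W J' \<inter> PiE J' (\<lambda>i. B (i - 1)). ef k (J', y)) - (\<Sum>y\<in>W J \<inter> PiE J B. ef k (J, y))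
          = (real (cntf (nk k) (wk k) (\<lambda>v. P (shift v))) - real (cntf (nk k) (wk k) P)) / real (nk k)"
        unfolding ef_mass[OF fJ'] ef_mass[OF assms] c1 c2 by (simp only: diff_divide_distrib)
      ultimately show ?thesis using nk_pos[of k] by (simp add: abs_divide)
    qed
    have ev1: "eventually (\<lambda>k. 1 / real (nk k) \<le> \<delta>) sequentially"
      using ev_small[OF \<open>\<delta> > 0\<close>, of 1] by simp
    show "eventually (\<lambda>k. \<bar>(\<Sum>y\<in>W J' \<inter> PiE J' (\<lambda>i. B (i - 1)). ef k (J', y)) - (\<Sum>y\<in>W J \<inter> PiE J B. ef k (J, y))\<bar> \<le> \<delta>) sequentially"
      using ev1 by (rule eventually_mono) (rule order_trans[OF pt])
  qed (auto intro!: continuous_intros)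
  then show ?thesis by (simp add: J'_def)
qed

lemma q_zero: assumes "finite J" "\<And>v. v \<in> \<Omega> \<Longrightarrow> restrict v J \<noteq> y"
  shows "q (J, y) = 0"
proof -
  have "(\<lambda>x. x (J, y)) q = (\<lambda>x. 0) q"
  proof (rule q_eqI)
    fix \<delta> :: real assume "\<delta> > 0"
    have "cntf (nk k) (wk k) (\<lambda>v. restrict v J = y) = 0" for k
      unfolding cntf_def using assms(2)[OF orbit_in] by simp
    then show "eventually (\<lambda>k. \<bar>ef k (J, y) - 0\<bar> \<le> \<delta>) sequentially"
      using \<open>\<delta> > 0\<close> by (simp add: ef_def)
  qed (auto intro!: continuous_intros)
  then show ?thesis by simp
qed

end


context freqs begin

definition PJ :: "int set \<Rightarrow> (int \<Rightarrow> real) measure" where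
  "PJ J = distr (point_measure (W J) (\<lambda>y. ennreal (q (J, y)))) (PiM J (\<lambda>_. borel)) (\<lambda>x. x)"

lemma W_sub_space: "W J \<subseteq> space (PiM J (\<lambda>_. borel :: real measure))"
  by (auto simp: W_def space_PiM PiE_iff)

lemma meas_id: "(\<lambda>x. x) \<in> measurable (point_measure (W J) f) (PiM J (\<lambda>_. borel))"
  unfolding measurable_point_measure_eq1 using W_sub_space by auto

lemma sets_PJ: "sets (PJ J) = sets (PiM J (\<lambda>_. borel))"
  by (simp add: PJ_def)

lemma space_PJ: "space (PJ J) = space (PiM J (\<lambda>_. borel :: real measure))"
  by (simp add: PJ_def)

lemma emeasure_PJ: assumes "finite J" "X \<in> sets (PiM J (\<lambda>_. borel))"
  shows "emeasure (PJ J) X = ennreal (\<Sum>y\<in>W J \<inter> X. q (J, y))"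
proof -
  have "emeasure (PJ J) X = emeasure (point_measure (W J) (\<lambda>y. ennreal (q (J, y)))) (W J \<inter> X)"
    unfolding PJ_def by (subst emeasure_distr[OF meas_id assms(2)]) (simp add: Int_commute space_point_measure)
  also have "\<dots> = (\<Sum>y\<in>W J \<inter> X. ennreal (q (J, y)))"
    by (rule emeasure_point_measure_finite) (auto simp: finite_W assms)
  also have "\<dots> = ennreal (\<Sum>y\<in>W J \<inter> X. q (J, y))"
    by (rule sum_ennreal) (simp add: q_nonneg)
  finally show ?thesis .
qed

lemma prob_PJ: assumes "finite J" shows "prob_space (PJ J)"
proof (rule prob_spaceI)
  have "emeasure (PJ J) (space (PJ J)) = ennreal (\<Sum>y\<in>W J \<inter> space (PiM J (\<lambda>_. borel)). q (J, y))"
    unfolding space_PJ by (rule emeasure_PJ[OF assms]) simp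
  also have "W J \<inter> space (PiM J (\<lambda>_. borel)) = W J" using W_sub_space by blast
  finally show "emeasure (PJ J) (space (PJ J)) = 1" using q_sum1[OF assms] by simp
qed

lemma proj: "polish_projective UNIV PJ"
  unfolding polish_projective_def
proof (rule projective_family.intro)
  fix J H :: "int set" assume JH: "J \<subseteq> H" "finite H" "H \<subseteq> UNIV"
  have fJ: "finite J" using JH finite_subset by blast
  have mr: "(\<lambda>f. restrict f J) \<in> measurable (PJ H) (PiM J (\<lambda>_. borel))"
    using measurable_restrict_subset[OF JH(1)] by (simp add: measurable_cong_sets[OF sets_PJ refl])
  show "PJ J = distr (PJ H) (PiM J (\<lambda>_. borel)) (\<lambda>f. restrict f J)"
  proof (rule measure_eqI)
    show "sets (PJ J) = sets (distr (PJ H) (PiM J (\<lambda>_. borel)) (\<lambda>f. restrict f J))"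
      by (simp add: sets_PJ)
    fix X assume "X \<in> sets (PJ J)"
    then have X: "X \<in> sets (PiM J (\<lambda>_. borel))" by (simp add: sets_PJ)
    have pre: "(\<lambda>f. restrict f J) -` X \<inter> space (PJ H) \<in> sets (PiM H (\<lambda>_. borel))"
      using measurable_sets[OF mr X] by (simp add: sets_PJ)
    have "emeasure (distr (PJ H) (PiM J (\<lambda>_. borel)) (\<lambda>f. restrict f J)) X
        = emeasure (PJ H) ((\<lambda>f. restrict f J) -` X \<inter> space (PJ H))"
      by (rule emeasure_distr[OF mr X])
    also have "\<dots> = ennreal (\<Sum>y\<in>W H \<inter> ((\<lambda>f. restrict f J) -` X \<inter> space (PJ H)). q (H, y))"
      by (rule emeasure_PJ[OF JH(2) pre])
    also have "W H \<inter> ((\<lambda>f. restrict f J) -` X \<inter> space (PJ H)) = W H \<inter> {x. restrict x J \<in> X}"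
      using W_sub_space[of H] by (auto simp: space_PJ)
    also have "(\<Sum>y\<in>W H \<inter> {x. restrict x J \<in> X}. q (H, y)) = (\<Sum>y\<in>W J \<inter> X. q (J, y))"
      by (rule q_cons[OF JH(2,1)])
    finally have eq: "emeasure (distr (PJ H) (PiM J (\<lambda>_. borel)) (\<lambda>f. restrict f J)) X = ennreal (\<Sum>y\<in>W J \<inter> X. q (J, y))" .
    show "emeasure (PJ J) X = emeasure (distr (PJ H) (PiM J (\<lambda>_. borel)) (\<lambda>f. restrict f J)) X"
      using eq emeasure_PJ[OF fJ X] by (simp only:)
  qed
next
  fix J :: "int set" assume "finite J" "J \<subseteq> UNIV"
  then show "prob_space (PJ J)" by (simp add: prob_PJ)
qed

definition nu :: "(int \<Rightarrow> real) measure" where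
  "nu = projective_family.lim UNIV PJ (\<lambda>_. borel)"

lemma sets_nu: "sets nu = sets (borel :: (int \<Rightarrow> real) measure)"
  unfolding nu_def using projective_family.sets_lim[OF proj[unfolded polish_projective_def]]
  by (simp add: sets_PiM_equal_borel)

lemma space_nu: "space nu = UNIV"
  unfolding nu_def using projective_family.space_lim[OF proj[unfolded polish_projective_def]]
  by (simp add: space_PiM)

lemma emb_eq: "prod_emb UNIV (\<lambda>_. borel) J X = {w. restrict w J \<in> X}"
  by (auto simp: prod_emb_def space_PiM)

lemma cyl_sets: assumes "X \<in> sets (PiM J (\<lambda>_. borel))"
  shows "{w. restrict w J \<in> X} \<in> sets nu"
proof -
  have "prod_emb UNIV (\<lambda>_. borel :: real measure) J X \<in> sets (PiM UNIV (\<lambda>_. borel))"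
    by (rule measurable_prod_emb) (use assms in auto)
  then show ?thesis unfolding emb_eq by (simp add: sets_nu sets_PiM_equal_borel)
qed

lemma nu_cyl: assumes "finite J" "X \<in> sets (PiM J (\<lambda>_. borel))"
  shows "emeasure nu {w. restrict w J \<in> X} = ennreal (\<Sum>y\<in>W J \<inter> X. q (J, y))"
  using polish_projective.emeasure_lim_emb[OF proj _ assms(1,2)]
  by (simp add: nu_def emb_eq emeasure_PJ assms)

lemma prob_nu: "prob_space nu"
proof (rule prob_spaceI)
  have "emeasure nu {w. restrict w {} \<in> space (PiM {} (\<lambda>_. borel :: real measure))} = ennreal (\<Sum>y\<in>W {} \<inter> space (PiM {} (\<lambda>_. borel :: real measure)). q ({}, y))"
    by (rule nu_cyl) auto
  also have "W {} \<inter> space (PiM {} (\<lambda>_. borel :: real measure)) = W {}" using W_sub_space by blast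
  also have "{w. restrict w {} \<in> space (PiM {} (\<lambda>_. borel :: real measure))} = UNIV" by (auto simp: space_PiM)
  finally show "emeasure nu (space nu) = 1" using q_sum1[of "{}"] by (simp add: space_nu)
qed

end


lemma shift_borel: "shift \<in> borel_measurable (borel :: (int \<Rightarrow> real) measure)"
proof (rule measurable_coordinatewise_then_product)
  fix i :: int
  have "(\<lambda>x::int \<Rightarrow> real. x (i + 1)) \<in> borel_measurable borel"
    by (rule borel_measurable_continuous_onI[OF continuous_on_product_coordinates])
  then show "(\<lambda>x. shift x i) \<in> borel_measurable borel" by (simp add: shiftn_apply)
qed

context freqs begin

lemma shift_meas: "shift \<in> measurable nu nu"
  using shift_borel by (simp add: measurable_cong_sets[OF sets_nu sets_nu])

lemma closed_Omega: "closed \<Omega>" using ss by (simp add: subshift_def)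

lemma Omega_sets: "\<Omega> \<in> sets nu"
  using closed_Omega by (simp add: sets_nu)

lemma compl_null: "UNIV - \<Omega> \<in> null_sets nu"
proof -
  define Bad where "Bad = {(J, y). finite J \<and> y \<in> W J \<and> (\<forall>v\<in>\<Omega>. restrict v J \<noteq> y)}"
  define C :: "int set \<times> (int \<Rightarrow> real) \<Rightarrow> (int \<Rightarrow> real) set" where "C = (\<lambda>(J, y). {w. restrict w J \<in> {y}})"
  define D where "D i = {w. restrict w {i} \<in> PiE {i} (\<lambda>_. UNIV - A)}" for i :: int
  have cB: "countable Bad"
  proof (rule countable_subset)
    show "Bad \<subseteq> Sigma {J. finite J} W" by (auto simp: Bad_def)
    show "countable (Sigma {J. finite J} W)"
      by (rule countable_SIGMA) (auto intro: countable_Collect_finite countable_finite finite_W)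
  qed
  have singl: "{y} \<in> sets (PiM J (\<lambda>_. borel :: real measure))" if "finite J" "y \<in> W J" for J y
  proof -
    have "{y} = PiE J (\<lambda>i. {y i})" using that by (force simp: W_def PiE_iff extensional_def fun_eq_iff)
    then show ?thesis using that by (simp add: sets_PiM_I_finite)
  qed
  have nC: "C b \<in> null_sets nu" if "b \<in> Bad" for b
  proof -
    obtain J y where b0: "b = (J, y)" by (cases b)
    then have b: "b = (J, y)" "finite J" "y \<in> W J" "\<forall>v\<in>\<Omega>. restrict v J \<noteq> y"
      using that by (auto simp: Bad_def)
    have "emeasure nu (C b) = ennreal (\<Sum>y'\<in>W J \<inter> {y}. q (J, y'))"
      unfolding b(1) C_def prod.case by (rule nu_cyl[OF b(2) singl[OF b(2,3)]])
    also have "\<dots> = ennreal (q (J, y))" using b by simp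
    also have "q (J, y) = 0" by (rule q_zero) (use b in auto)
    finally show ?thesis unfolding null_sets_def using cyl_sets[OF singl[OF b(2,3)]] b by (simp add: C_def)
  qed
  have cA: "UNIV - A \<in> sets borel" using finA by (simp add: finite_imp_closed borel_closed sets.compl_sets)
  have nD: "D i \<in> null_sets nu" for i
  proof -
    have X: "PiE {i} (\<lambda>_. UNIV - A) \<in> sets (PiM {i} (\<lambda>_. borel))" using cA by (simp add: sets_PiM_I_finite)
    have "W {i} \<inter> PiE {i} (\<lambda>_. UNIV - A) = {}" by (auto simp: W_def PiE_iff)
    moreover have "emeasure nu (D i) = ennreal (\<Sum>y\<in>W {i} \<inter> PiE {i} (\<lambda>_. UNIV - A). q ({i}, y))"
      unfolding D_def by (rule nu_cyl[OF _ X]) simp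
    ultimately have "emeasure nu (D i) = 0" by simp
    then show ?thesis unfolding null_sets_def using cyl_sets[OF X] by (simp add: D_def)
  qed
  have N: "(\<Union>i. D i) \<union> (\<Union>b\<in>Bad. C b) \<in> null_sets nu"
    using null_sets_UN'[OF cB nC] null_sets_UN'[of "UNIV :: int set" D nu] nD by auto
  have cover: "UNIV - \<Omega> \<subseteq> (\<Union>i. D i) \<union> (\<Union>b\<in>Bad. C b)"
  proof
    fix w assume w: "w \<in> UNIV - \<Omega>"
    show "w \<in> (\<Union>i. D i) \<union> (\<Union>b\<in>Bad. C b)"
    proof (cases "\<exists>i. w i \<notin> A")
      case True
      then obtain i where "w i \<notin> A" by blast
      then have "w \<in> D i" by (auto simp: D_def PiE_iff)
      then show ?thesis by blast
    next
      case False
      have "open (- \<Omega>)" using closed_Omega by (simp add: open_Compl)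
      then have "openin (product_topology (\<lambda>i. euclidean) UNIV) (- \<Omega>)" by (simp add: open_fun_def)
      moreover have wc: "w \<in> - \<Omega>" using w by simp
      ultimately have "\<exists>U. finite {i \<in> UNIV. U i \<noteq> topspace euclidean} \<and> (\<forall>i\<in>UNIV. openin euclidean (U i)) \<and> w \<in> PiE UNIV U \<and> PiE UNIV U \<subseteq> - \<Omega>"
        unfolding openin_product_topology_alt by blast
      then obtain U where U: "finite {i. U i \<noteq> UNIV}" "w \<in> PiE UNIV U" "PiE UNIV U \<subseteq> - \<Omega>"
        by auto
      define J where "J = {i. U i \<noteq> UNIV}"
      have "(J, restrict w J) \<in> Bad"
        unfolding Bad_def
      proof (clarsimp, intro conjI)
        show "finite J" using U by (simp add: J_def)
        show "restrict w J \<in> W J" using False by (auto simp: W_def)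
        show "\<forall>v\<in>\<Omega>. restrict v J \<noteq> restrict w J"
        proof (intro ballI notI)
          fix v assume v: "v \<in> \<Omega>" "restrict v J = restrict w J"
          have "v \<in> PiE UNIV U"
          proof -
            have "v i \<in> U i" for i
            proof (cases "i \<in> J")
              case True
              then have "v i = w i" using v(2) by (metis restrict_apply')
              then show ?thesis using U(2) by auto
            next
              case False then show ?thesis by (simp add: J_def)
            qed
            then show ?thesis by auto
          qed
          then show False using U(3) v(1) by auto
        qed
      qed
      moreover have "w \<in> C (J, restrict w J)" by (simp add: C_def)
      ultimately show ?thesis by blast
    qed
  qed
  show ?thesis
    by (rule null_sets_subset[OF N _ cover]) (use Omega_sets in \<open>simp add: space_nu[symmetric] sets.compl_sets\<close>)
qed

lemma nu_Omega: "emeasure nu \<Omega> = 1"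
proof -
  interpret prob_space nu by (rule prob_nu)
  have "emeasure nu (UNIV - (UNIV - \<Omega>)) = emeasure nu UNIV"
    by (rule emeasure_Diff_null_set[OF compl_null]) (metis sets.top space_nu)
  then show ?thesis using emeasure_space_1 by (simp add: space_nu Diff_Diff_Int)
qed

lemma nu_inv: "distr nu nu shift = nu"
proof (rule measure_eqI_PiM_infinite[where I=UNIV and M="\<lambda>_. borel"])
  show "sets (distr nu nu shift) = sets (PiM UNIV (\<lambda>_. borel))" by (simp add: sets_nu sets_PiM_equal_borel)
  show "sets nu = sets (PiM UNIV (\<lambda>_. borel))" by (simp add: sets_nu sets_PiM_equal_borel)
  show "finite_measure (distr nu nu shift)"
    using prob_space.prob_space_distr[OF prob_nu shift_meas] by (simp add: prob_space_def)
next
  fix B :: "int \<Rightarrow> real set" and J :: "int set"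
  assume J: "finite J" "J \<subseteq> UNIV" and B: "\<And>i. i \<in> J \<Longrightarrow> B i \<in> sets borel"
  define J' where "J' = (\<lambda>i. i + 1) ` J"
  have X: "PiE J B \<in> sets (PiM J (\<lambda>_. borel))" using B J by (simp add: sets_PiM_I_finite)
  have X': "PiE J' (\<lambda>i. B (i - 1)) \<in> sets (PiM J' (\<lambda>_. borel))"
    using B J by (intro sets_PiM_I_finite) (auto simp: J'_def)
  have fJ': "finite J'" using J by (simp add: J'_def)
  have pre: "shift -` {w. restrict w J \<in> PiE J B} \<inter> space nu = {w. restrict w J' \<in> PiE J' (\<lambda>i. B (i - 1))}"
    by (auto simp: space_nu J'_def PiE_iff shiftn_apply)
  have "emeasure (distr nu nu shift) {w. restrict w J \<in> PiE J B} = emeasure nu (shift -` {w. restrict w J \<in> PiE J B} \<inter> space nu)"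
    by (rule emeasure_distr[OF shift_meas cyl_sets[OF X]])
  also have "\<dots> = emeasure nu {w. restrict w J' \<in> PiE J' (\<lambda>i. B (i - 1))}"
    by (simp only: pre)
  also have "\<dots> = ennreal (\<Sum>y\<in>W J' \<inter> PiE J' (\<lambda>i. B (i - 1)). q (J', y))"
    by (rule nu_cyl[OF fJ' X'])
  also have "\<dots> = ennreal (\<Sum>y\<in>W J \<inter> PiE J B. q (J, y))"
    unfolding J'_def using q_shift[OF J(1), of B] by simp
  also have "\<dots> = emeasure nu {w. restrict w J \<in> PiE J B}"
    by (rule nu_cyl[OF J(1) X, symmetric])
  finally show "emeasure (distr nu nu shift) (prod_emb UNIV (\<lambda>_. borel) J (PiE J B)) = emeasure nu (prod_emb UNIV (\<lambda>_. borel) J (PiE J B))"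
    by (simp only: emb_eq)
qed

definition nu' where "nu' = restrict_space nu \<Omega>"

lemma Omega_int: "\<Omega> \<inter> space nu \<in> sets nu" using Omega_sets by (simp add: space_nu)

lemma inv_nu': "invariant_prob \<Omega> nu'"
  unfolding invariant_prob_def
proof (intro conjI)
  show "prob_space nu'" unfolding nu'_def by (rule prob_space_restrict_space[OF Omega_sets nu_Omega])
  show "space nu' = \<Omega>" by (simp add: nu'_def space_restrict_space space_nu)
  show "sets nu' = sets (restrict_space borel \<Omega>)" unfolding nu'_def by (rule sets_restrict_space_cong[OF sets_nu])
  have sm: "shift \<in> \<Omega> \<rightarrow> \<Omega>" using ss by (auto simp: subshift_def)
  show sm': "shift \<in> measurable nu' nu'" unfolding nu'_def by (rule measurable_restrict_space3[OF shift_meas sm])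
  show "distr nu' nu' shift = nu'"
  proof (rule measure_eqI)
    show "sets (distr nu' nu' shift) = sets nu'" by simp
    fix X assume "X \<in> sets (distr nu' nu' shift)"
    then have X: "X \<in> sets nu'" by simp
    then have X2: "X \<subseteq> \<Omega>" "X \<in> sets nu" unfolding nu'_def using sets_restrict_space_iff[OF Omega_int] by auto
    have pm: "shift -` X \<in> sets nu" using measurable_sets[OF shift_meas X2(2)] by (simp add: space_nu)
    have "emeasure (distr nu' nu' shift) X = emeasure nu' (shift -` X \<inter> \<Omega>)"
      by (subst emeasure_distr[OF sm' X]) (simp add: nu'_def space_restrict_space space_nu)
    also have "\<dots> = emeasure nu (shift -` X \<inter> \<Omega>)"
      unfolding nu'_def by (rule emeasure_restrict_space[OF Omega_int]) auto
    also have "shift -` X \<inter> \<Omega> = shift -` X - (UNIV - \<Omega>)" by auto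
    also have "emeasure nu \<dots> = emeasure nu (shift -` X)"
      by (rule emeasure_Diff_null_set[OF compl_null pm])
    also have "\<dots> = emeasure (distr nu nu shift) X"
      by (subst emeasure_distr[OF shift_meas X2(2)]) (simp add: space_nu)
    also have "\<dots> = emeasure nu X" by (simp add: nu_inv)
    also have "\<dots> = emeasure nu' X"
      unfolding nu'_def by (rule emeasure_restrict_space[OF Omega_int X2(1), symmetric])
    finally show "emeasure (distr nu' nu' shift) X = emeasure nu' X" .
  qed
qed

lemma nu'_cyl: assumes "finite J" "y \<in> W J"
  shows "emeasure nu' ({w. restrict w J = y} \<inter> \<Omega>) = ennreal (q (J, y))"
proof -
  have singl: "{y} \<in> sets (PiM J (\<lambda>_. borel :: real measure))"
  proof -
    have "{y} = PiE J (\<lambda>i. {y i})" using assms by (force simp: W_def PiE_iff extensional_def fun_eq_iff)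
    then show ?thesis using assms by (simp add: sets_PiM_I_finite)
  qed
  have Cs: "{w. restrict w J \<in> {y}} \<in> sets nu" by (rule cyl_sets[OF singl])
  have "emeasure nu' ({w. restrict w J = y} \<inter> \<Omega>) = emeasure nu ({w. restrict w J = y} \<inter> \<Omega>)"
    unfolding nu'_def by (rule emeasure_restrict_space[OF Omega_int]) auto
  also have "emeasure nu ({w. restrict w J = y} \<inter> \<Omega>) = emeasure nu ({w. restrict w J \<in> {y}} - (UNIV - \<Omega>))"
    by (rule arg_cong[where f="emeasure nu"]) auto
  also have "emeasure nu ({w. restrict w J \<in> {y}} - (UNIV - \<Omega>)) = emeasure nu {w. restrict w J \<in> {y}}"
    by (rule emeasure_Diff_null_set[OF compl_null Cs])
  also have "\<dots> = ennreal (\<Sum>y'\<in>W J \<inter> {y}. q (J, y'))" by (rule nu_cyl[OF assms(1) singl])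
  also have "\<dots> = ennreal (q (J, y))" using assms by simp
  finally show ?thesis .
qed

end


context freqs begin

lemma singl_sets: assumes "finite J" "y \<in> W J" shows "{y} \<in> sets (PiM J (\<lambda>_. borel :: real measure))"
proof -
  have "{y} = PiE J (\<lambda>i. {y i})" using assms by (force simp: W_def PiE_iff extensional_def fun_eq_iff)
  then show ?thesis using assms by (simp add: sets_PiM_I_finite)
qed

lemma C_sets: assumes "finite J" "y \<in> W J" shows "{w. restrict w J = y} \<inter> \<Omega> \<in> sets nu'"
proof -
  have "{w. restrict w J \<in> {y}} \<in> sets nu" by (rule cyl_sets[OF singl_sets[OF assms]])
  then have "{w. restrict w J = y} \<inter> \<Omega> \<in> sets nu" using Omega_sets by auto
  then show ?thesis unfolding nu'_def sets_restrict_space_iff[OF Omega_int] by auto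
qed

lemma FF_rep:
  assumes J: "J = {1..int N}" and w: "w \<in> \<Omega>"
  shows "FF E N w = (\<Sum>y\<in>W J. FF E N y * indicator ({w. restrict w J = y} \<inter> \<Omega>) w)"
proof -
  have "(\<Sum>y\<in>W J. FF E N y * indicator ({w. restrict w J = y} \<inter> \<Omega>) w) = (\<Sum>y\<in>W J. if restrict w J = y then FF E N y else 0)"
    using w by (intro sum.cong refl) (auto simp: indicator_def)
  also have "\<dots> = FF E N (restrict w J)"
    using restrict_in_W[OF w] finite_W[of J] J by (simp add: sum.delta')
  also have "\<dots> = FF E N w" by (rule FF_local) (simp add: J)
  finally show ?thesis by simp
qed

lemma FF_integral:
  assumes J: "J = {1..int N}"
  shows "(\<lambda>w. FF E N w) \<in> borel_measurable nu'"
    and "integral\<^sup>L nu' (\<lambda>w. FF E N w) = (\<Sum>y\<in>W J. FF E N y * q (J, y))"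
proof -
  have fJ: "finite J" using J by simp
  have sp: "space nu' = \<Omega>" using inv_nu' by (simp add: invariant_prob_def)
  have fin: "emeasure nu' ({w. restrict w J = y} \<inter> \<Omega>) < \<infinity>" if "y \<in> W J" for y
    using nu'_cyl[OF fJ that] by simp
  have meas: "(\<lambda>w. \<Sum>y\<in>W J. FF E N y * indicator ({w. restrict w J = y} \<inter> \<Omega>) w) \<in> borel_measurable nu'"
    using C_sets[OF fJ] by (intro borel_measurable_sum borel_measurable_times borel_measurable_const borel_measurable_indicator) auto
  show "(\<lambda>w. FF E N w) \<in> borel_measurable nu'"
    by (rule measurable_cong[THEN iffD2, OF _ meas]) (simp add: sp FF_rep[OF J])
  have "integral\<^sup>L nu' (\<lambda>w. FF E N w) = integral\<^sup>L nu' (\<lambda>w. \<Sum>y\<in>W J. FF E N y * indicator ({w. restrict w J = y} \<inter> \<Omega>) w)"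
    by (rule Bochner_Integration.integral_cong) (simp_all add: sp FF_rep[OF J])
  also have "\<dots> = (\<Sum>y\<in>W J. integral\<^sup>L nu' (\<lambda>w. FF E N y * indicator ({w. restrict w J = y} \<inter> \<Omega>) w))"
    by (rule Bochner_Integration.integral_sum)
       (auto intro!: integrable_mult_right integrable_real_indicator C_sets[OF fJ] fin)
  also have "\<dots> = (\<Sum>y\<in>W J. FF E N y * q (J, y))"
  proof (rule sum.cong[OF refl])
    fix y assume y: "y \<in> W J"
    have "measure nu' ({w. restrict w J = y} \<inter> \<Omega> \<inter> space nu') = q (J, y)"
      using nu'_cyl[OF fJ y] q_nonneg by (simp add: sp measure_def Int_assoc)
    then show "integral\<^sup>L nu' (\<lambda>w. FF E N y * indicator ({w. restrict w J = y} \<inter> \<Omega>) w) = FF E N y * q (J, y)"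
      by (simp add: Bochner_Integration.integral_indicator)
  qed
  finally show "integral\<^sup>L nu' (\<lambda>w. FF E N w) = (\<Sum>y\<in>W J. FF E N y * q (J, y))" .
qed

lemma orbit_sum:
  assumes J: "J = {1..int N}" and w: "w \<in> \<Omega>"
  shows "(\<Sum>j<n. FF E N (shiftn (int j) w)) = (\<Sum>y\<in>W J. real (card {j. j < n \<and> restrict (shiftn (int j) w) J = y}) * FF E N y)"
proof -
  have fJ: "finite J" using J by simp
  have "(\<Sum>y\<in>W J. real (card {j. j < n \<and> restrict (shiftn (int j) w) J = y}) * FF E N y)
      = (\<Sum>y\<in>W J. \<Sum>j\<in>{j \<in> {..<n}. restrict (shiftn (int j) w) J = y}. FF E N (shiftn (int j) w))"
  proof (rule sum.cong[OF refl])
    fix y assume "y \<in> W J"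
    have "(\<Sum>j\<in>{j \<in> {..<n}. restrict (shiftn (int j) w) J = y}. FF E N (shiftn (int j) w))
        = (\<Sum>j\<in>{j \<in> {..<n}. restrict (shiftn (int j) w) J = y}. FF E N y)"
    proof (rule sum.cong[OF refl])
      fix j assume "j \<in> {j \<in> {..<n}. restrict (shiftn (int j) w) J = y}"
      then have "restrict (shiftn (int j) w) J = y" by simp
      then show "FF E N (shiftn (int j) w) = FF E N y"
        by (intro FF_local) (auto simp: J)
    qed
    also have "\<dots> = real (card {j \<in> {..<n}. restrict (shiftn (int j) w) J = y}) * FF E N y"
      by (rule sum_constant)
    also have "{j \<in> {..<n}. restrict (shiftn (int j) w) J = y} = {j. j < n \<and> restrict (shiftn (int j) w) J = y}"
      by blast
    finally show "real (card {j. j < n \<and> restrict (shiftn (int j) w) J = y}) * FF E N y =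
      (\<Sum>j\<in>{j \<in> {..<n}. restrict (shiftn (int j) w) J = y}. FF E N (shiftn (int j) w))" by simp
  qed
  also have "\<dots> = (\<Sum>j<n. FF E N (shiftn (int j) w))"
  proof (rule sum.group)
    show "finite {..<n}" by simp
    show "finite (W J)" by (rule finite_W[OF fJ])
    show "(\<lambda>j. restrict (shiftn (int j) w) J) ` {..<n} \<subseteq> W J"
      using restrict_in_W subshift_shiftn_in[OF ss w] by blast
  qed
  finally show ?thesis by simp
qed

end


lemma upper_uniform:
  fixes A :: "real set" and \<Omega> :: "(int \<Rightarrow> real) set" and \<mu> :: "(int \<Rightarrow> real) measure" and E e :: real
  assumes ss: "subshift A \<Omega>" and se: "strictly_ergodic \<Omega>"
    and ip: "invariant_prob \<Omega> \<mu>" and ae: "AE w in \<mu>. lyap_limit E w 0" and e: "e > 0"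
  shows "\<exists>N0. \<forall>n\<ge>N0. \<forall>w\<in>\<Omega>. FF E n w \<le> e * real n"
proof (rule ccontr)
  assume neg: "\<not> (\<exists>N0. \<forall>n\<ge>N0. \<forall>w\<in>\<Omega>. FF E n w \<le> e * real n)"
  then have "\<forall>k. \<exists>n. n \<ge> Suc k \<and> (\<exists>w\<in>\<Omega>. FF E n w > e * real n)" by (auto simp: not_le)
  then obtain nk where nk: "\<And>k. nk k \<ge> Suc k \<and> (\<exists>w\<in>\<Omega>. FF E (nk k) w > e * real (nk k))" by metis
  then obtain wk where wkp: "\<And>k. wk k \<in> \<Omega> \<and> FF E (nk k) (wk k) > e * real (nk k)" by metis
  interpret freqs A \<Omega> nk wk
    by unfold_locales (use ss nk wkp in \<open>auto simp: Suc_le_eq\<close>)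
  have mu: "\<mu> = nu'" using se ip inv_nu' unfolding strictly_ergodic_def by blast
  have psp: "prob_space \<mu>" and sp: "space \<mu> = \<Omega>" using ip by (auto simp: invariant_prob_def)
  define B where "B = (\<Sum>a\<in>A. \<bar>a\<bar>)"
  define c where "c = ln (\<bar>E\<bar> + B + 2)"
  have B0: "0 \<le> B" by (simp add: B_def sum_nonneg)
  have c0: "0 \<le> c" using B0 by (simp add: c_def)
  have bnd: "\<bar>w i\<bar> \<le> B" if "w \<in> \<Omega>" for w i
    unfolding B_def by (rule member_le_sum[where f=abs]) (auto simp: finA subshift_vals[OF ss that])
  have FFle: "FF E n w \<le> real n * c" if "w \<in> \<Omega>" for w n
    unfolding c_def by (rule FF_le) (rule bnd[OF that])
  have key: "e \<le> integral\<^sup>L \<mu> (\<lambda>w. FF E N w / real N)" if N: "N \<ge> 1" for N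
  proof -
    define J where "J = {1..int N}"
    have ineq_k: "real N * e - 2 * real N * real N * c / real (nk k) \<le> (\<Sum>y\<in>W J. ef k (J, y) * FF E N y)" for k
    proof -
      define w where "w = wk k"
      define n where "n = nk k"
      have w\<Omega>: "w \<in> \<Omega>" by (simp add: w_def wk)
      have npos: "real n > 0" using nk_pos by (simp add: n_def)
      have blk: "real N * FF E n w \<le> (\<Sum>j<n. FF E N (shiftn (int j) w)) + 2 * real N * real N * c"
      proof -
        have "real N * (\<lambda>a j. FF E a (shiftn (int j) w)) n 0 \<le> (\<Sum>j<n. (\<lambda>a j. FF E a (shiftn (int j) w)) N j) + 2 * real N * real N * c"
        proof (rule block_ineq)
          fix a b j
          have "FF E (a + b) (shiftn (int j) w) \<le> FF E b (shiftn (int a) (shiftn (int j) w)) + FF E a (shiftn (int j) w)"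
            by (rule FF_sub)
          also have "shiftn (int a) (shiftn (int j) w) = shiftn (int (j + a)) w" by (simp add: shiftn_shiftn add.commute)
          finally show "FF E (a + b) (shiftn (int j) w) \<le> FF E b (shiftn (int (j + a)) w) + FF E a (shiftn (int j) w)" .
        next
          fix a j show "0 \<le> FF E a (shiftn (int j) w)" by (rule FF_nonneg)
        next
          fix a j show "FF E a (shiftn (int j) w) \<le> real a * c"
            by (rule FFle) (rule subshift_shiftn_in[OF ss w\<Omega>])
        qed (rule N)
        then show ?thesis by simp
      qed
      have big: "FF E n w > e * real n" using wkp by (simp add: w_def n_def)
      have osum: "(\<Sum>j<n. FF E N (shiftn (int j) w)) = real n * (\<Sum>y\<in>W J. ef k (J, y) * FF E N y)"
      proof -
        have "(\<Sum>j<n. FF E N (shiftn (int j) w)) = (\<Sum>y\<in>W J. real (card {j. j < n \<and> restrict (shiftn (int j) w) J = y}) * FF E N y)"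
          by (rule orbit_sum[OF J_def w\<Omega>])
        also have "\<dots> = (\<Sum>y\<in>W J. real n * (ef k (J, y) * FF E N y))"
          using npos by (intro sum.cong refl) (simp add: ef_def cntf_def n_def w_def)
        finally show ?thesis by (simp add: sum_distrib_left)
      qed
      have "real n * (real N * e) \<le> real N * FF E n w"
        using big N by (simp add: algebra_simps)
      then have "real n * (real N * e) \<le> real n * (\<Sum>y\<in>W J. ef k (J, y) * FF E N y) + 2 * real N * real N * c"
        using blk osum by linarith
      then have "real N * e \<le> (\<Sum>y\<in>W J. ef k (J, y) * FF E N y) + 2 * real N * real N * c / real n"
        using npos by (simp add: field_simps)
      then show ?thesis by (simp add: n_def)
    qed
    have "(\<lambda>x. real N * e - (\<Sum>y\<in>W J. x (J, y) * FF E N y)) q \<le> 0"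
    proof (rule clusterD)
      fix \<delta> :: real assume "\<delta> > 0"
      have "eventually (\<lambda>k. 2 * real N * real N * c / real (nk k) \<le> \<delta>) sequentially"
        by (rule ev_small[OF \<open>\<delta> > 0\<close>]) (simp add: c0)
      then show "eventually (\<lambda>k. (\<lambda>x. real N * e - (\<Sum>y\<in>W J. x (J, y) * FF E N y)) (ef k) \<le> \<delta>) sequentially"
        by (rule eventually_mono) (use ineq_k in \<open>smt (verit)\<close>)
    qed (auto intro!: continuous_intros)
    then have "real N * e \<le> (\<Sum>y\<in>W J. q (J, y) * FF E N y)" by simp
    also have "\<dots> = integral\<^sup>L nu' (\<lambda>w. FF E N w)"
      using FF_integral(2)[OF J_def, of E] by (simp add: mult.commute)
    finally have "real N * e \<le> integral\<^sup>L \<mu> (\<lambda>w. FF E N w)" by (simp add: mu)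
    then show ?thesis using N by (simp add: field_simps)
  qed
  have lim: "(\<lambda>N. integral\<^sup>L \<mu> (\<lambda>w. FF E N w / real N)) \<longlonglongrightarrow> integral\<^sup>L \<mu> (\<lambda>w. 0)"
  proof (rule integral_dominated_convergence[where w="\<lambda>_. c"])
    show "(\<lambda>w. 0::real) \<in> borel_measurable \<mu>" by simp
    show "(\<lambda>w. FF E N w / real N) \<in> borel_measurable \<mu>" for N
      using FF_integral(1)[OF refl, of E N] by (simp add: mu)
    show "integrable \<mu> (\<lambda>_. c)"
      using psp by (simp add: prob_space_def finite_measure.integrable_const)
    show "AE x in \<mu>. (\<lambda>N. FF E N x / real N) \<longlonglongrightarrow> 0"
      using ae
    proof (rule AE_mp, intro AE_I2 impI)
      fix x assume "lyap_limit E x 0"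
      then have "((\<lambda>n. growth E n x) \<longlongrightarrow> 0) (sup at_top at_bot)" by (simp add: lyap_limit_def)
      then have "((\<lambda>n. growth E n x) \<longlongrightarrow> 0) at_top" by (rule filterlim_mono) simp_all
      then have "((\<lambda>N. growth E (int N) x) \<longlongrightarrow> 0) sequentially"
        by (rule filterlim_compose) (rule filterlim_int_sequentially)
      moreover have "growth E (int N) x = FF E N x / real N" for N by (simp add: growth_pos)
      ultimately show "(\<lambda>N. FF E N x / real N) \<longlonglongrightarrow> 0" by simp
    qed
    show "AE x in \<mu>. norm (FF E N x / real N) \<le> c" for N
    proof (rule AE_I2)
      fix x assume "x \<in> space \<mu>"
      then have x: "x \<in> \<Omega>" by (simp add: sp)
      have "0 \<le> FF E N x" by (rule FF_nonneg)
      moreover have "FF E N x \<le> real N * c" by (rule FFle[OF x])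
      ultimately show "norm (FF E N x / real N) \<le> c"
        using c0 by (cases "N = 0") (simp_all add: field_simps)
    qed
  qed
  have "e \<le> integral\<^sup>L \<mu> (\<lambda>w. 0)"
    by (rule LIMSEQ_le_const[OF lim]) (use key in auto)
  then show False using e by simp
qed

theorem lemma4p2:
  fixes A :: "real set" and \<Omega> :: "(int \<Rightarrow> real) set" and \<mu> :: "(int \<Rightarrow> real) measure" and E :: real
  assumes "subshift A \<Omega>" and "strictly_ergodic \<Omega>"
    and "invariant_prob \<Omega> \<mu>"
    and "AE w in \<mu>. lyap_limit E w 0"
  shows "uniform_cocycle \<Omega> E"
proof -
  have ul: "uniform_limit \<Omega> (\<lambda>n w. growth E n w) (\<lambda>_. 0) (sup at_top at_bot)"
    unfolding uniform_limit_iff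
  proof (intro allI impI)
    fix e :: real assume e: "e > 0"
    obtain N0 where N0: "\<forall>n\<ge>N0. \<forall>w\<in>\<Omega>. FF E n w \<le> e / 2 * real n"
      using upper_uniform[OF assms, of "e / 2"] e by auto
    define M where "M = max N0 1"
    have bound: "\<bar>FF E m w / real m\<bar> < e" if "m \<ge> M" "w \<in> \<Omega>" for m w
    proof -
      have m1: "real m \<ge> 1" using that by (simp add: M_def)
      have "FF E m w \<le> e / 2 * real m" using N0 that by (simp add: M_def)
      moreover have "0 \<le> FF E m w" by (rule FF_nonneg)
      ultimately have "FF E m w / real m \<le> e / 2" "0 \<le> FF E m w / real m"
        using m1 by (simp_all add: field_simps)
      then show ?thesis using e by (simp only: abs_of_nonneg)
    qed
    show "eventually (\<lambda>n. \<forall>w\<in>\<Omega>. dist (growth E n w) 0 < e) (sup at_top at_bot)"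
      unfolding eventually_sup
    proof
      show "eventually (\<lambda>n. \<forall>w\<in>\<Omega>. dist (growth E n w) 0 < e) at_top"
        unfolding eventually_at_top_linorder
      proof (intro exI allI impI ballI)
        fix n :: int and w assume n: "int M \<le> n" and w: "w \<in> \<Omega>"
        have n0: "n \<ge> 0" using n by simp
        have "growth E n w = FF E (nat n) w / real (nat n)"
          using growth_pos[OF n0] n0 by simp
        moreover have "nat n \<ge> M" using n by simp
        ultimately show "dist (growth E n w) 0 < e" using bound w by simp
      qed
      show "eventually (\<lambda>n. \<forall>w\<in>\<Omega>. dist (growth E n w) 0 < e) at_bot"
        unfolding eventually_at_bot_linorder
      proof (intro exI allI impI ballI)
        fix n :: int and w assume n: "n \<le> - int M" and w: "w \<in> \<Omega>"
        define m where "m = nat (- n)"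
        have nm: "n = - int m" using n by (simp add: m_def)
        have mM: "m \<ge> M" using n by (simp add: m_def)
        have "growth E n w = FF E m (shiftn (- int m) w) / real m" unfolding nm by (rule growth_neg)
        moreover have "shiftn (- int m) w \<in> \<Omega>" by (rule subshift_shiftn_neg_in[OF assms(1) w])
        ultimately show "dist (growth E n w) 0 < e" using bound mM by simp
      qed
    qed
  qed
  then show ?thesis unfolding uniform_cocycle_def by blast
qed


end
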